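(* Let $G$ be a group acting on a set $X$ and $f:\mathcal{P}_{\mathrm{fin}}(X)\to\mathbb{R}$ a $G$-invariant submodular function such that the minimum $m=\min_{Y\in\mathcal{P}_{\mathrm{fin}}(X),\,Y\neq\emptyset}f(Y)$ exists. Let $\mathcal{A}$ be the set of atoms for $f$ and $\mathcal{C}(X)=\bigcup_{Y_0\in\mathcal{A}}Y_0$ (the core of $X$). Then: (0) for every atom $Y_0$ and every $g\in G$, $g\cdot Y_0$ is an atom and either $g\cdot Y_0=Y_0$ or $g\cdot Y_0\cap Y_0=\emptyset$; distinct atoms are disjoint; (1) $G$ acts on $\mathcal{A}$ by $(g,Y_0)\mapsto g\cdot Y_0$; (2) $g\cdot\mathcal{C}(X)=\mathcal{C}(X)$ for all $g\in G$, so $\mathcal{C}(X)$, the disjoint union of the atoms, is a disjoint union of $G$-orbits in $X$; (3) for any atom $Y_0$ and any $y_0\in Y_0$ one has $G_{y_0}\subset G_{Y_0}$; and for any $G$-orbit $\mathcal{O}$ and atom $Y_0$, either $\mathcal{O}\cap Y_0=\emptyset$ or, for any $y_0\in\mathcal{O}\cap Y_0$, $\mathcal{O}\cap Y_0=\{g\cdot y_0\mid g\in G_{Y_0}\}$ and the map $gG_{y_0}\mapsto g\cdot y_0$ is a bijection from $G_{Y_0}/G_{y_0}$ onto $\mathcal{O}\cap Y_0$. Furthermore, when the action of $G$ on $X$ is transitive, $\mathcal{C}(X)=X$, i.e. each element of $X$ belongs to an atom (and the atoms partition $X$).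
   Context: $\mathcal{P}_{\mathrm{fin}}(X)$ is the set of finite subsets of $X$. $f$ is submodular if $f(Y\cap Z)+f(Y\cup Z)\leq f(Y)+f(Z)$ for all finite $Y,Z\subset X$, and $G$-invariant if $f(g\cdot Y)=f(Y)$ for all $g\in G$, where $g\cdot Y=\{g\cdot y\mid y\in Y\}$. A fragment for $f$ is a nonempty finite $Y\subset X$ with $f(Y)=m$; an atom is a fragment of minimum cardinality among fragments. $G_{y}=\{g\in G\mid g\cdot y=y\}$ and $G_Y=\{g\in G\mid g\cdot Y=Y\}$. *)

theory Defs
  imports Complex_Main "HOL-Algebra.Group_Action"
begin

definition nefin :: "'b set \<Rightarrow> 'b set set" where
  "nefin E = {Y. finite Y \<and> Y \<noteq> {} \<and> Y \<subseteq> E}"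

definition submodular_on :: "'b set \<Rightarrow> ('b set \<Rightarrow> real) \<Rightarrow> bool" where
  "submodular_on E f \<longleftrightarrow> (\<forall>Y Z. finite Y \<longrightarrow> finite Z \<longrightarrow> Y \<subseteq> E \<longrightarrow> Z \<subseteq> E \<longrightarrow>
      f (Y \<inter> Z) + f (Y \<union> Z) \<le> f Y + f Z)"

definition invariant_under :: "_ \<Rightarrow> 'b set \<Rightarrow> ('a \<Rightarrow> 'b \<Rightarrow> 'b) \<Rightarrow> ('b set \<Rightarrow> real) \<Rightarrow> bool" where
  "invariant_under G E \<phi> f \<longleftrightarrow> (\<forall>g\<in>carrier G. \<forall>Y. finite Y \<longrightarrow> Y \<subseteq> E \<longrightarrow> f (\<phi> g ` Y) = f Y)"

definition min_exists :: "'b set \<Rightarrow> ('b set \<Rightarrow> real) \<Rightarrow> bool" where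
  "min_exists E f \<longleftrightarrow> (\<exists>Y\<in>nefin E. \<forall>Z\<in>nefin E. f Y \<le> f Z)"

definition fragment :: "'b set \<Rightarrow> ('b set \<Rightarrow> real) \<Rightarrow> 'b set \<Rightarrow> bool" where
  "fragment E f Y \<longleftrightarrow> Y \<in> nefin E \<and> (\<forall>Z\<in>nefin E. f Y \<le> f Z)"

definition atom :: "'b set \<Rightarrow> ('b set \<Rightarrow> real) \<Rightarrow> 'b set \<Rightarrow> bool" where
  "atom E f Y \<longleftrightarrow> fragment E f Y \<and> (\<forall>Z. fragment E f Z \<longrightarrow> card Y \<le> card Z)"

definition atoms :: "'b set \<Rightarrow> ('b set \<Rightarrow> real) \<Rightarrow> 'b set set" where
  "atoms E f = {Y. atom E f Y}"

definition core :: "'b set \<Rightarrow> ('b set \<Rightarrow> real) \<Rightarrow> 'b set" where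
  "core E f = \<Union> (atoms E f)"

definition set_stabilizer :: "_ \<Rightarrow> ('a \<Rightarrow> 'b \<Rightarrow> 'b) \<Rightarrow> 'b set \<Rightarrow> 'a set" where
  "set_stabilizer G \<phi> Y = {g \<in> carrier G. \<phi> g ` Y = Y}"

end

theory Submission
  imports Defs
begin

locale smctx = group_action G E \<phi> for G (structure) and E and \<phi> +
  fixes f :: "'b set \<Rightarrow> real"
  assumes sub: "submodular_on E f"
    and inv: "invariant_under G E \<phi> f"
    and mn: "min_exists E f"
begin

lemma grp: "group G"
  using group_hom by (rule group_hom.axioms(1))

lemma phi_one: "x \<in> E \<Longrightarrow> \<phi> \<one> x = x"
  using id_eq_one by (metis restrict_apply')

lemma phi_inv_cancel: "g \<in> carrier G \<Longrightarrow> x \<in> E \<Longrightarrow> \<phi> g (\<phi> (inv g) x) = x"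
proof -
  assume g: "g \<in> carrier G" and x: "x \<in> E"
  interpret group G by (rule grp)
  have "\<phi> g (\<phi> (inv g) x) = \<phi> (g \<otimes> inv g) x"
    using composition_rule[of x g "inv g"] g x by simp
  also have "\<dots> = x" using g x phi_one by simp
  finally show ?thesis .
qed

lemma img_props:
  assumes g: "g \<in> carrier G" and Y: "Y \<subseteq> E"
  shows "\<phi> g ` Y \<subseteq> E" "card (\<phi> g ` Y) = card Y"
proof -
  show "\<phi> g ` Y \<subseteq> E" using surj_prop[OF g] Y by blast
  have "inj_on (\<phi> g) Y" using inj_prop[OF g] Y inj_on_subset by blast
  then show "card (\<phi> g ` Y) = card Y" by (rule card_image)
qed

lemma img_nefin: "g \<in> carrier G \<Longrightarrow> Y \<in> nefin E \<Longrightarrow> \<phi> g ` Y \<in> nefin E"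
  using img_props(1) unfolding nefin_def by auto

lemma atom_img:
  assumes g: "g \<in> carrier G" and A: "atom E f A"
  shows "atom E f (\<phi> g ` A)"
proof -
  have An: "A \<in> nefin E" using A unfolding atom_def fragment_def by auto
  have fe: "f (\<phi> g ` A) = f A" using inv g An unfolding invariant_under_def nefin_def by auto
  have c: "card (\<phi> g ` A) = card A" using img_props(2)[OF g] An unfolding nefin_def by auto
  show ?thesis using A img_nefin[OF g An] fe c unfolding atom_def fragment_def by auto
qed

lemma atoms_eq:
  assumes A: "atom E f A" and B: "atom E f B" and ne: "A \<inter> B \<noteq> {}"
  shows "A = B"
proof -
  have An: "A \<in> nefin E" and Bn: "B \<in> nefin E"
    using A B unfolding atom_def fragment_def by auto
  have mA: "\<forall>Z\<in>nefin E. f A \<le> f Z" and mB: "\<forall>Z\<in>nefin E. f B \<le> f Z"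
    using A B unfolding atom_def fragment_def by blast+
  have fAB: "f A \<le> f B" "f B \<le> f A" using mA mB An Bn by blast+
  have In: "A \<inter> B \<in> nefin E" and Un: "A \<union> B \<in> nefin E" using An Bn ne unfolding nefin_def by auto
  have s: "f (A \<inter> B) + f (A \<union> B) \<le> f A + f B"
    using sub An Bn unfolding submodular_on_def nefin_def by auto
  have "f A \<le> f (A \<union> B)" using mA Un by blast
  then have le: "f (A \<inter> B) \<le> f A" using s fAB by linarith
  have frag: "fragment E f (A \<inter> B)"
    unfolding fragment_def using In le mA by force
  have "card A \<le> card (A \<inter> B)" using A frag unfolding atom_def by auto
  moreover have "card (A \<inter> B) \<le> card A" using An unfolding nefin_def by (intro card_mono) auto
  ultimately have "card (A \<inter> B) = card A" by linarith
  then have e1: "A \<inter> B = A" using An card_subset_eq[of A "A \<inter> B"] unfolding nefin_def by auto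
  have "card B \<le> card (A \<inter> B)" using B frag unfolding atom_def by auto
  moreover have "card (A \<inter> B) \<le> card B" using Bn unfolding nefin_def by (intro card_mono) auto
  ultimately have "card (A \<inter> B) = card B" by linarith
  then have "A \<inter> B = B" using Bn card_subset_eq[of B "A \<inter> B"] unfolding nefin_def by auto
  with e1
  show ?thesis by simp
qed

lemma atom_sub: "atom E f A \<Longrightarrow> A \<subseteq> E"
  unfolding atom_def fragment_def nefin_def by auto

lemma atom_back:
  assumes g: "g \<in> carrier G" and A: "atom E f A"
  shows "\<phi> g ` (\<phi> (inv g) ` A) = A" "atom E f (\<phi> (inv g) ` A)"
proof -
  show "\<phi> g ` (\<phi> (inv g) ` A) = A"
    unfolding image_image using phi_inv_cancel[OF g] atom_sub[OF A] by (simp add: subset_eq)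
  show "atom E f (\<phi> (inv g) ` A)"
    using atom_img[OF group.inv_closed[OF grp g] A] .
qed

lemma atoms_bij:
  assumes g: "g \<in> carrier G"
  shows "(\<lambda>Y\<in>atoms E f. \<phi> g ` Y) \<in> Bij (atoms E f)"
proof -
  have ig: "inv g \<in> carrier G" by (rule group.inv_closed[OF grp g])
  have iig: "inv (inv g) = g" by (rule group.inv_inv[OF grp g])
  have bk: "\<And>A. A \<in> atoms E f \<Longrightarrow> \<phi> (inv g) ` (\<phi> g ` A) = A"
  proof -
    fix A assume A: "A \<in> atoms E f"
    have "atom E f A" using A unfolding atoms_def by simp
    from atom_back(1)[OF ig this] show "\<phi> (inv g) ` (\<phi> g ` A) = A" unfolding iig .
  qed
  have inj: "inj_on (\<lambda>Y. \<phi> g ` Y) (atoms E f)"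
  proof (rule inj_onI)
    fix A B assume A: "A \<in> atoms E f" and B: "B \<in> atoms E f" and e: "\<phi> g ` A = \<phi> g ` B"
    have "A = \<phi> (inv g) ` (\<phi> g ` A)" using bk[OF A] by simp
    also have "\<dots> = \<phi> (inv g) ` (\<phi> g ` B)" using e by simp
    also have "\<dots> = B" using bk[OF B] .
    finally show "A = B" .
  qed
  have img: "(\<lambda>Y. \<phi> g ` Y) ` atoms E f = atoms E f"
  proof
    show "(\<lambda>Y. \<phi> g ` Y) ` atoms E f \<subseteq> atoms E f"
    proof
      fix Z assume "Z \<in> (\<lambda>Y. \<phi> g ` Y) ` atoms E f"
      then obtain Y where Y: "Y \<in> atoms E f" and Z: "Z = \<phi> g ` Y" by blast
      have "atom E f Y" using Y unfolding atoms_def by simp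
      then have "atom E f Z" using atom_img[OF g] Z by simp
      then show "Z \<in> atoms E f" unfolding atoms_def by simp
    qed
    show "atoms E f \<subseteq> (\<lambda>Y. \<phi> g ` Y) ` atoms E f"
    proof
      fix A assume A: "A \<in> atoms E f"
      have a: "atom E f A" using A unfolding atoms_def by simp
      have "A = \<phi> g ` (\<phi> (inv g) ` A)" using atom_back(1)[OF g a] by simp
      moreover have "\<phi> (inv g) ` A \<in> atoms E f" using atom_back(2)[OF g a] unfolding atoms_def by simp
      ultimately show "A \<in> (\<lambda>Y. \<phi> g ` Y) ` atoms E f" by (rule image_eqI)
    qed
  qed
  have "bij_betw (\<lambda>Y. \<phi> g ` Y) (atoms E f) (atoms E f)"
    unfolding bij_betw_def using inj img by (rule conjI)
  then have "bij_betw (\<lambda>Y\<in>atoms E f. \<phi> g ` Y) (atoms E f) (atoms E f)"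
    by (simp only: bij_betw_restrict_eq)
  then show ?thesis unfolding Bij_def by simp
qed

lemma atoms_action: "group_action G (atoms E f) (\<lambda>g. \<lambda>Y\<in>atoms E f. \<phi> g ` Y)"
proof -
  interpret group G by (rule grp)
  have hom: "(\<lambda>g. \<lambda>Y\<in>atoms E f. \<phi> g ` Y) \<in> hom G (BijGroup (atoms E f))"
  proof (rule homI)
    fix g assume "g \<in> carrier G"
    then show "(\<lambda>Y\<in>atoms E f. \<phi> g ` Y) \<in> carrier (BijGroup (atoms E f))"
      using atoms_bij by (simp add: BijGroup_def)
  next
    fix g h assume g: "g \<in> carrier G" and h: "h \<in> carrier G"
    have "(\<lambda>Y\<in>atoms E f. \<phi> (g \<otimes> h) ` Y) =
          compose (atoms E f) (\<lambda>Y\<in>atoms E f. \<phi> g ` Y) (\<lambda>Y\<in>atoms E f. \<phi> h ` Y)"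
    proof
      fix Y
      show "(\<lambda>Y\<in>atoms E f. \<phi> (g \<otimes> h) ` Y) Y =
          compose (atoms E f) (\<lambda>Y\<in>atoms E f. \<phi> g ` Y) (\<lambda>Y\<in>atoms E f. \<phi> h ` Y) Y"
      proof (cases "Y \<in> atoms E f")
        case True
        then have YE: "Y \<subseteq> E" using atom_sub unfolding atoms_def by auto
        have hY: "\<phi> h ` Y \<in> atoms E f" using True atom_img h unfolding atoms_def by auto
        have "\<phi> (g \<otimes> h) ` Y = \<phi> g ` \<phi> h ` Y"
          unfolding image_image
        proof (rule image_cong)
          fix y assume "y \<in> Y"
          then have "y \<in> E" using YE by blast
          then show "\<phi> (g \<otimes> h) y = \<phi> g (\<phi> h y)" using composition_rule[OF _ g h] by blast
        qed simp
        then show ?thesis using True hY by (simp add: compose_def)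
      next
        case False then show ?thesis by (simp add: compose_def)
      qed
    qed
    then show "(\<lambda>Y\<in>atoms E f. \<phi> (g \<otimes> h) ` Y) =
      (\<lambda>Y\<in>atoms E f. \<phi> g ` Y) \<otimes>\<^bsub>BijGroup (atoms E f)\<^esub> (\<lambda>Y\<in>atoms E f. \<phi> h ` Y)"
      using atoms_bij[OF g] atoms_bij[OF h] unfolding BijGroup_def by simp
  qed
  show ?thesis
    unfolding group_action_def group_hom_def group_hom_axioms_def
    using grp group_BijGroup hom by blast
qed

lemma core_inv: "g \<in> carrier G \<Longrightarrow> \<phi> g ` core E f = core E f"
proof -
  assume g: "g \<in> carrier G"
  have b: "bij_betw (\<lambda>Y\<in>atoms E f. \<phi> g ` Y) (atoms E f) (atoms E f)"
    using atoms_bij[OF g] unfolding Bij_def by blast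
  then have "bij_betw (\<lambda>Y. \<phi> g ` Y) (atoms E f) (atoms E f)"
    by (simp only: bij_betw_restrict_eq)
  then have e: "(\<lambda>Y. \<phi> g ` Y) ` atoms E f = atoms E f"
    by (rule bij_betw_imp_surj_on)
  show ?thesis unfolding core_def image_Union e ..
qed

lemma core_sub: "core E f \<subseteq> E"
proof
  fix x assume "x \<in> core E f"
  then obtain A where A: "A \<in> atoms E f" "x \<in> A" unfolding core_def by blast
  then have "A \<subseteq> E" using atom_sub unfolding atoms_def by simp
  then show "x \<in> E" using A by blast
qed

lemma core_orbits: "core E f = \<Union> {Orb \<in> orbits G E \<phi>. Orb \<subseteq> core E f}"
proof
  show "core E f \<subseteq> \<Union> {Orb \<in> orbits G E \<phi>. Orb \<subseteq> core E f}"
  proof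
    fix x assume x: "x \<in> core E f"
    have xE: "x \<in> E" using x core_sub by auto
    have "orbit G \<phi> x \<subseteq> core E f"
      using core_inv x unfolding orbit_def by auto
    moreover have "orbit G \<phi> x \<in> orbits G E \<phi>" using xE unfolding orbits_def by auto
    ultimately show "x \<in> \<Union> {Orb \<in> orbits G E \<phi>. Orb \<subseteq> core E f}"
      using orbit_refl[OF xE] by blast
  qed
qed auto

lemma stab_sub: "atom E f Y0 \<Longrightarrow> y0 \<in> Y0 \<Longrightarrow> stabilizer G \<phi> y0 \<subseteq> set_stabilizer G \<phi> Y0"
proof
  fix g assume A: "atom E f Y0" and y: "y0 \<in> Y0" and g: "g \<in> stabilizer G \<phi> y0"
  have gc: "g \<in> carrier G" and gy: "\<phi> g y0 = y0" using g unfolding stabilizer_def by auto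
  have "\<phi> g ` Y0 \<inter> Y0 \<noteq> {}" using gy y by force
  then have "\<phi> g ` Y0 = Y0" using atoms_eq[OF atom_img[OF gc A] A] by simp
  then show "g \<in> set_stabilizer G \<phi> Y0" using gc unfolding set_stabilizer_def by auto
qed

lemma coset_char:
  assumes g: "g \<in> carrier G" and y: "y0 \<in> E"
  shows "g <# stabilizer G \<phi> y0 = {k \<in> carrier G. \<phi> k y0 = \<phi> g y0}"
proof -
  interpret group G by (rule grp)
  show ?thesis
  proof
    show "g <# stabilizer G \<phi> y0 \<subseteq> {k \<in> carrier G. \<phi> k y0 = \<phi> g y0}"
      unfolding l_coset_def stabilizer_def using composition_rule[OF y g] g by auto
    show "{k \<in> carrier G. \<phi> k y0 = \<phi> g y0} \<subseteq> g <# stabilizer G \<phi> y0"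
    proof
      fix k assume k: "k \<in> {k \<in> carrier G. \<phi> k y0 = \<phi> g y0}"
      have kc: "k \<in> carrier G" and e: "\<phi> k y0 = \<phi> g y0" using k by auto
      define h where "h = inv g \<otimes> k"
      have hc: "h \<in> carrier G" using g kc h_def by simp
      have "\<phi> h y0 = \<phi> (inv g) (\<phi> k y0)" using composition_rule[OF y _ kc] g h_def by simp
      also have "\<dots> = y0" using e orbit_sym_aux[OF g y] by simp
      finally have "h \<in> stabilizer G \<phi> y0" using hc unfolding stabilizer_def by auto
      moreover have "k = g \<otimes> h" using g kc h_def by (simp add: m_assoc[symmetric])
      ultimately show "k \<in> g <# stabilizer G \<phi> y0" unfolding l_coset_def by auto
    qed
  qed
qed

lemma coset_the:
  assumes g: "g \<in> carrier G" and y: "y0 \<in> E"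
  shows "the_elem ((\<lambda>k. \<phi> k y0) ` (g <# stabilizer G \<phi> y0)) = \<phi> g y0"
proof -
  have "(\<lambda>k. \<phi> k y0) ` (g <# stabilizer G \<phi> y0) = {\<phi> g y0}"
    using coset_char[OF g y] g by auto
  then show ?thesis by simp
qed

lemma orbit_part:
  assumes O: "Orb \<in> orbits G E \<phi>" and A: "atom E f Y0" and y: "y0 \<in> Orb \<inter> Y0"
  shows "Orb \<inter> Y0 = {\<phi> g y0 | g. g \<in> set_stabilizer G \<phi> Y0} \<and>
         bij_betw (\<lambda>C. the_elem ((\<lambda>g. \<phi> g y0) ` C))
           {g <# stabilizer G \<phi> y0 | g. g \<in> set_stabilizer G \<phi> Y0} (Orb \<inter> Y0)"
proof -
  obtain x where xE: "x \<in> E" and Ox: "Orb = orbit G \<phi> x" using O unfolding orbits_def by auto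
  have yE: "y0 \<in> E" using y atom_sub[OF A] by blast
  have Oy: "Orb = orbit G \<phi> y0"
  proof -
    have yx: "y0 \<in> orbit G \<phi> x" using y Ox by auto
    have xy: "x \<in> orbit G \<phi> y0" using orbit_sym[OF xE yE yx] .
    show ?thesis unfolding Ox
    proof
      show "orbit G \<phi> x \<subseteq> orbit G \<phi> y0"
      proof
        fix z assume z: "z \<in> orbit G \<phi> x"
        have zE: "z \<in> E" using z element_image xE unfolding orbit_def by blast
        show "z \<in> orbit G \<phi> y0" using orbit_trans[OF yE xE zE xy z] .
      qed
      show "orbit G \<phi> y0 \<subseteq> orbit G \<phi> x"
      proof
        fix z assume z: "z \<in> orbit G \<phi> y0"
        have zE: "z \<in> E" using z element_image yE unfolding orbit_def by blast
        show "z \<in> orbit G \<phi> x" using orbit_trans[OF xE yE zE yx z] .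
      qed
    qed
  qed
  have eq: "Orb \<inter> Y0 = {\<phi> g y0 | g. g \<in> set_stabilizer G \<phi> Y0}"
  proof
    show "Orb \<inter> Y0 \<subseteq> {\<phi> g y0 | g. g \<in> set_stabilizer G \<phi> Y0}"
    proof
      fix z assume z: "z \<in> Orb \<inter> Y0"
      then obtain g where g: "g \<in> carrier G" and zg: "z = \<phi> g y0" using Oy unfolding orbit_def by auto
      have "\<phi> g ` Y0 \<inter> Y0 \<noteq> {}" using z zg y by auto
      then have "\<phi> g ` Y0 = Y0" using atoms_eq[OF atom_img[OF g A] A] by simp
      then show "z \<in> {\<phi> g y0 | g. g \<in> set_stabilizer G \<phi> Y0}"
        using g zg unfolding set_stabilizer_def by auto
    qed
    show "{\<phi> g y0 | g. g \<in> set_stabilizer G \<phi> Y0} \<subseteq> Orb \<inter> Y0"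
      using y Oy unfolding set_stabilizer_def orbit_def by auto
  qed
  have ssc: "set_stabilizer G \<phi> Y0 \<subseteq> carrier G" unfolding set_stabilizer_def by auto
  let ?F = "\<lambda>C. the_elem ((\<lambda>g. \<phi> g y0) ` C)"
  let ?C = "{g <# stabilizer G \<phi> y0 | g. g \<in> set_stabilizer G \<phi> Y0}"
  have inj: "inj_on ?F ?C"
  proof (rule inj_onI)
    fix C1 C2 assume c1: "C1 \<in> ?C" and c2: "C2 \<in> ?C" and e: "?F C1 = ?F C2"
    from c1 obtain g1 where g1s: "g1 \<in> set_stabilizer G \<phi> Y0" and C1: "C1 = g1 <# stabilizer G \<phi> y0"
      by blast
    from c2 obtain g2 where g2s: "g2 \<in> set_stabilizer G \<phi> Y0" and C2: "C2 = g2 <# stabilizer G \<phi> y0"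
      by blast
    have g1: "g1 \<in> carrier G" using g1s ssc by blast
    have g2: "g2 \<in> carrier G" using g2s ssc by blast
    have "\<phi> g1 y0 = \<phi> g2 y0" using e C1 C2 coset_the[OF g1 yE] coset_the[OF g2 yE] by simp
    then show "C1 = C2" using C1 C2 coset_char[OF g1 yE] coset_char[OF g2 yE] by simp
  qed
  have img: "?F ` ?C = Orb \<inter> Y0"
  proof -
    have "?F ` ?C = {\<phi> g y0 | g. g \<in> set_stabilizer G \<phi> Y0}"
    proof
      show "?F ` ?C \<subseteq> {\<phi> g y0 | g. g \<in> set_stabilizer G \<phi> Y0}"
      proof
        fix z assume "z \<in> ?F ` ?C"
        then obtain g where g: "g \<in> set_stabilizer G \<phi> Y0" and z: "z = ?F (g <# stabilizer G \<phi> y0)"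
          by blast
        have "g \<in> carrier G" using g ssc by blast
        then have "z = \<phi> g y0" using z coset_the[OF _ yE] by simp
        then show "z \<in> {\<phi> g y0 | g. g \<in> set_stabilizer G \<phi> Y0}" using g by blast
      qed
      show "{\<phi> g y0 | g. g \<in> set_stabilizer G \<phi> Y0} \<subseteq> ?F ` ?C"
      proof
        fix z assume "z \<in> {\<phi> g y0 | g. g \<in> set_stabilizer G \<phi> Y0}"
        then obtain g where g: "g \<in> set_stabilizer G \<phi> Y0" and z: "z = \<phi> g y0" by auto
        have "z = ?F (g <# stabilizer G \<phi> y0)" using coset_the[OF _ yE] g ssc z by auto
        moreover have "g <# stabilizer G \<phi> y0 \<in> ?C" using g by auto
        ultimately show "z \<in> ?F ` ?C" by blast
      qed
    qed
    then show ?thesis using eq by simp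
  qed
  show ?thesis using eq inj img unfolding bij_betw_def by blast
qed

lemma atom_exists: "\<exists>A. atom E f A"
proof -
  obtain Y where Y: "fragment E f Y" using mn unfolding min_exists_def fragment_def by blast
  define n where "n = (LEAST n. \<exists>Y. fragment E f Y \<and> card Y = n)"
  have "\<exists>Y. fragment E f Y \<and> card Y = n"
    unfolding n_def by (rule LeastI_ex) (use Y in blast)
  then obtain A where A: "fragment E f A" "card A = n" by blast
  have "\<forall>Z. fragment E f Z \<longrightarrow> card A \<le> card Z"
  proof (intro allI impI)
    fix Z assume "fragment E f Z"
    then have "n \<le> card Z" unfolding n_def by (intro Least_le) blast
    then show "card A \<le> card Z" using A(2) by simp
  qed
  then show ?thesis using A(1) unfolding atom_def by blast
qed

lemma transitive_part:
  assumes tr: "\<forall>x\<in>E. \<forall>y\<in>E. \<exists>g\<in>carrier G. \<phi> g x = y"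
  shows "core E f = E \<and> (\<forall>x\<in>E. \<exists>!A. A \<in> atoms E f \<and> x \<in> A)"
proof -
  obtain A where A: "atom E f A" using atom_exists by auto
  then obtain a where a: "a \<in> A" unfolding atom_def fragment_def nefin_def by auto
  have aE: "a \<in> E" using a atom_sub[OF A] by auto
  have ex: "\<exists>B. B \<in> atoms E f \<and> x \<in> B" if x: "x \<in> E" for x
  proof -
    obtain g where g: "g \<in> carrier G" "\<phi> g a = x" using tr aE x by blast
    then show ?thesis using atom_img[OF g(1) A] a unfolding atoms_def by auto
  qed
  have "E \<subseteq> core E f"
  proof
    fix x assume "x \<in> E"
    then obtain B where "B \<in> atoms E f" "x \<in> B" using ex by blast
    then show "x \<in> core E f" unfolding core_def by blast
  qed
  then have "core E f = E" using core_sub by auto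
  moreover have "\<forall>x\<in>E. \<exists>!A. A \<in> atoms E f \<and> x \<in> A"
  proof
    fix x assume "x \<in> E"
    then obtain B where B: "B \<in> atoms E f" "x \<in> B" using ex by blast
    show "\<exists>!A. A \<in> atoms E f \<and> x \<in> A"
    proof (rule ex1I[of _ B])
      show "B \<in> atoms E f \<and> x \<in> B" using B by simp
      fix C assume "C \<in> atoms E f \<and> x \<in> C"
      then show "C = B" using atoms_eq B unfolding atoms_def by blast
    qed
  qed
  ultimately show ?thesis by simp
qed

end

theorem mainTheorem7:
  fixes G (structure) and E :: "'b set" and \<phi> :: "'a \<Rightarrow> 'b \<Rightarrow> 'b" and f :: "'b set \<Rightarrow> real"
  assumes act: "group_action G E \<phi>"
    and sub: "submodular_on E f"
    and inv: "invariant_under G E \<phi> f"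
    and mn: "min_exists E f"
  shows
    "(\<forall>Y0\<in>atoms E f. \<forall>g\<in>carrier G.
        atom E f (\<phi> g ` Y0) \<and> (\<phi> g ` Y0 = Y0 \<or> \<phi> g ` Y0 \<inter> Y0 = {}))
     \<and> (\<forall>A\<in>atoms E f. \<forall>B\<in>atoms E f. A \<noteq> B \<longrightarrow> A \<inter> B = {})
     \<and> group_action G (atoms E f) (\<lambda>g. \<lambda>Y\<in>atoms E f. \<phi> g ` Y)
     \<and> (\<forall>g\<in>carrier G. \<phi> g ` core E f = core E f)
     \<and> core E f = \<Union> {Orb \<in> orbits G E \<phi>. Orb \<subseteq> core E f}
     \<and> (\<forall>Y0\<in>atoms E f. \<forall>y0\<in>Y0. stabilizer G \<phi> y0 \<subseteq> set_stabilizer G \<phi> Y0)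
     \<and> (\<forall>Orb\<in>orbits G E \<phi>. \<forall>Y0\<in>atoms E f.
          Orb \<inter> Y0 = {} \<or>
          (\<forall>y0\<in>Orb \<inter> Y0.
             Orb \<inter> Y0 = {\<phi> g y0 | g. g \<in> set_stabilizer G \<phi> Y0} \<and>
             bij_betw (\<lambda>C. the_elem ((\<lambda>g. \<phi> g y0) ` C))
               {g <# stabilizer G \<phi> y0 | g. g \<in> set_stabilizer G \<phi> Y0} (Orb \<inter> Y0)))
     \<and> ((\<forall>x\<in>E. \<forall>y\<in>E. \<exists>g\<in>carrier G. \<phi> g x = y) \<longrightarrow>
          core E f = E \<and> (\<forall>x\<in>E. \<exists>!A. A \<in> atoms E f \<and> x \<in> A))"
proof -
  interpret smctx G E \<phi> f
    using act sub inv mn by (simp add: smctx_def smctx_axioms_def)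
  have p0: "\<forall>Y0\<in>atoms E f. \<forall>g\<in>carrier G.
        atom E f (\<phi> g ` Y0) \<and> (\<phi> g ` Y0 = Y0 \<or> \<phi> g ` Y0 \<inter> Y0 = {})"
  proof (intro ballI)
    fix Y0 g assume Y: "Y0 \<in> atoms E f" and g: "g \<in> carrier G"
    have A: "atom E f Y0" using Y unfolding atoms_def by simp
    have gA: "atom E f (\<phi> g ` Y0)" using atom_img[OF g A] .
    have "\<phi> g ` Y0 = Y0 \<or> \<phi> g ` Y0 \<inter> Y0 = {}"
    proof (cases "\<phi> g ` Y0 \<inter> Y0 = {}")
      case False then show ?thesis using atoms_eq[OF gA A] by simp
    qed simp
    then show "atom E f (\<phi> g ` Y0) \<and> (\<phi> g ` Y0 = Y0 \<or> \<phi> g ` Y0 \<inter> Y0 = {})"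
      using gA by simp
  qed
  have p1: "\<forall>A\<in>atoms E f. \<forall>B\<in>atoms E f. A \<noteq> B \<longrightarrow> A \<inter> B = {}"
  proof (intro ballI impI)
    fix A B assume "A \<in> atoms E f" "B \<in> atoms E f" "A \<noteq> B"
    then show "A \<inter> B = {}" using atoms_eq unfolding atoms_def by blast
  qed
  have p5: "\<forall>Y0\<in>atoms E f. \<forall>y0\<in>Y0. stabilizer G \<phi> y0 \<subseteq> set_stabilizer G \<phi> Y0"
  proof (intro ballI)
    fix Y0 y0 assume "Y0 \<in> atoms E f" "y0 \<in> Y0"
    then show "stabilizer G \<phi> y0 \<subseteq> set_stabilizer G \<phi> Y0"
      using stab_sub unfolding atoms_def by simp
  qed
  have p6: "\<forall>Orb\<in>orbits G E \<phi>. \<forall>Y0\<in>atoms E f.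
          Orb \<inter> Y0 = {} \<or>
          (\<forall>y0\<in>Orb \<inter> Y0.
             Orb \<inter> Y0 = {\<phi> g y0 | g. g \<in> set_stabilizer G \<phi> Y0} \<and>
             bij_betw (\<lambda>C. the_elem ((\<lambda>g. \<phi> g y0) ` C))
               {g <# stabilizer G \<phi> y0 | g. g \<in> set_stabilizer G \<phi> Y0} (Orb \<inter> Y0))"
  proof (intro ballI)
    fix Orb Y0 assume O: "Orb \<in> orbits G E \<phi>" and Y: "Y0 \<in> atoms E f"
    have A: "atom E f Y0" using Y unfolding atoms_def by simp
    show "Orb \<inter> Y0 = {} \<or>
          (\<forall>y0\<in>Orb \<inter> Y0.
             Orb \<inter> Y0 = {\<phi> g y0 | g. g \<in> set_stabilizer G \<phi> Y0} \<and>
             bij_betw (\<lambda>C. the_elem ((\<lambda>g. \<phi> g y0) ` C))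
               {g <# stabilizer G \<phi> y0 | g. g \<in> set_stabilizer G \<phi> Y0} (Orb \<inter> Y0))"
    proof (rule disjI2, rule ballI)
      fix y0 assume "y0 \<in> Orb \<inter> Y0"
      then show "Orb \<inter> Y0 = {\<phi> g y0 | g. g \<in> set_stabilizer G \<phi> Y0} \<and>
             bij_betw (\<lambda>C. the_elem ((\<lambda>g. \<phi> g y0) ` C))
               {g <# stabilizer G \<phi> y0 | g. g \<in> set_stabilizer G \<phi> Y0} (Orb \<inter> Y0)"
        by (rule orbit_part[OF O A])
    qed
  qed
  have p2: "group_action G (atoms E f) (\<lambda>g. \<lambda>Y\<in>atoms E f. \<phi> g ` Y)" by (rule atoms_action)
  have p3: "\<forall>g\<in>carrier G. \<phi> g ` core E f = core E f" using core_inv by blast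
  have p4: "core E f = \<Union> {Orb \<in> orbits G E \<phi>. Orb \<subseteq> core E f}" by (rule core_orbits)
  have p7: "(\<forall>x\<in>E. \<forall>y\<in>E. \<exists>g\<in>carrier G. \<phi> g x = y) \<longrightarrow>
          core E f = E \<and> (\<forall>x\<in>E. \<exists>!A. A \<in> atoms E f \<and> x \<in> A)"
    using transitive_part by blast
  show ?thesis
    by (rule conjI[OF p0 conjI[OF p1 conjI[OF p2 conjI[OF p3 conjI[OF p4 conjI[OF p5 conjI[OF p6 p7]]]]]]])
qed

end
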